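(* Let $(L,\preceq)$ be a lattice with meet $\wedge$ and join $\vee$, and let $\delta$ be an equivalence relation on $L$. Then $\delta$ is a local congruence on $L$ if and only if, for all $a,b,c\in L$: whenever $(a,b)\in\delta$ and $a\wedge b\preceq c\preceq a\vee b$, we have $(a\vee c,\,b\vee c)\in\delta$ and $(a\wedge c,\,b\wedge c)\in\delta$.
   Context: Given a lattice $(L,\preceq)$, an equivalence relation $\delta$ on $L$ is called a local congruence if (i) each equivalence class of $\delta$ is a sublattice of $L$ (closed under $\wedge$ and $\vee$ of $L$), and (ii) each equivalence class of $\delta$ is convex (if $x,y$ belong to the class and $x\preceq z\preceq y$ with $z\in L$, then $z$ belongs to the class). *)

theory Defs
  imports Main
begin

definition local_congruence :: "('a::lattice) rel \<Rightarrow> bool" where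
  "local_congruence \<delta> \<longleftrightarrow>
     equiv UNIV \<delta> \<and>
     (\<forall>X \<in> UNIV // \<delta>.
        (\<forall>x\<in>X. \<forall>y\<in>X. inf x y \<in> X \<and> sup x y \<in> X) \<and>
        (\<forall>x\<in>X. \<forall>y\<in>X. \<forall>z. x \<le> z \<and> z \<le> y \<longrightarrow> z \<in> X))"

end

theory Submission
  imports Defs
begin

lemma lc_char:
  fixes \<delta> :: "('a::lattice) rel"
  assumes e: "equiv UNIV \<delta>"
  shows "local_congruence \<delta> \<longleftrightarrow>
    (\<forall>x y. (x,y) \<in> \<delta> \<longrightarrow> (x, inf x y) \<in> \<delta> \<and> (x, sup x y) \<in> \<delta>) \<and>
    (\<forall>x y z. (x,y) \<in> \<delta> \<and> x \<le> z \<and> z \<le> y \<longrightarrow> (x,z) \<in> \<delta>)"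
proof -
  have sy: "\<And>x y. (x,y) \<in> \<delta> \<Longrightarrow> (y,x) \<in> \<delta>" using e by (meson equivE symD)
  have tr: "\<And>x y z. (x,y) \<in> \<delta> \<Longrightarrow> (y,z) \<in> \<delta> \<Longrightarrow> (x,z) \<in> \<delta>" using e by (meson equivE transD)
  have rf: "\<And>x. (x,x) \<in> \<delta>" using e by (meson UNIV_I equivE refl_onD)
  show ?thesis
  proof
    assume L: "local_congruence \<delta>"
    have P: "(\<forall>x\<in>\<delta>``{a}. \<forall>y\<in>\<delta>``{a}. inf x y \<in> \<delta>``{a} \<and> sup x y \<in> \<delta>``{a}) \<and>
        (\<forall>x\<in>\<delta>``{a}. \<forall>y\<in>\<delta>``{a}. \<forall>z. x \<le> z \<and> z \<le> y \<longrightarrow> z \<in> \<delta>``{a})" for a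
    proof -
      have q: "\<delta>``{a} \<in> UNIV // \<delta>" by (rule quotientI) simp
      have all: "\<forall>X \<in> UNIV // \<delta>.
        (\<forall>x\<in>X. \<forall>y\<in>X. inf x y \<in> X \<and> sup x y \<in> X) \<and>
        (\<forall>x\<in>X. \<forall>y\<in>X. \<forall>z. x \<le> z \<and> z \<le> y \<longrightarrow> z \<in> X)" using L unfolding local_congruence_def by (rule conjunct2)
      show ?thesis by (rule bspec[OF all q])
    qed
    show "(\<forall>x y. (x,y) \<in> \<delta> \<longrightarrow> (x, inf x y) \<in> \<delta> \<and> (x, sup x y) \<in> \<delta>) \<and>
    (\<forall>x y z. (x,y) \<in> \<delta> \<and> x \<le> z \<and> z \<le> y \<longrightarrow> (x,z) \<in> \<delta>)"
    proof (intro conjI allI impI)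
      fix x y assume "(x,y) \<in> \<delta>"
      then have hx: "x \<in> \<delta>``{x}" and hy: "y \<in> \<delta>``{x}" using rf by auto
      have "inf x y \<in> \<delta>``{x} \<and> sup x y \<in> \<delta>``{x}"
        using bspec[OF bspec[OF conjunct1[OF P[of x]] hx] hy] .
      then show "(x, inf x y) \<in> \<delta>" "(x, sup x y) \<in> \<delta>" by simp_all
    next
      fix x y z assume "(x,y) \<in> \<delta> \<and> x \<le> z \<and> z \<le> y"
      then have hx: "x \<in> \<delta>``{x}" and hy: "y \<in> \<delta>``{x}" and "x \<le> z \<and> z \<le> y" using rf by auto
      then have "z \<in> \<delta>``{x}"
        using spec[OF bspec[OF bspec[OF conjunct2[OF P[of x]] hx] hy], of z] by blast
      then show "(x,z) \<in> \<delta>" by simp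
    qed
  next
    assume R: "(\<forall>x y. (x,y) \<in> \<delta> \<longrightarrow> (x, inf x y) \<in> \<delta> \<and> (x, sup x y) \<in> \<delta>) \<and>
    (\<forall>x y z. (x,y) \<in> \<delta> \<and> x \<le> z \<and> z \<le> y \<longrightarrow> (x,z) \<in> \<delta>)"
    show "local_congruence \<delta>"
      unfolding local_congruence_def
    proof (intro conjI ballI e allI impI)
      fix X x y assume X: "X \<in> UNIV // \<delta>" and xy: "x \<in> X" "y \<in> X"
      from X obtain a where Xa: "X = \<delta>``{a}" by (auto elim: quotientE)
      have ax: "(a,x) \<in> \<delta>" "(a,y) \<in> \<delta>" using xy Xa by auto
      have xy': "(x,y) \<in> \<delta>" using ax sy tr by blast
      have "(x, inf x y) \<in> \<delta>" "(x, sup x y) \<in> \<delta>" using R xy' by simp_all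
      then have "(a, inf x y) \<in> \<delta>" "(a, sup x y) \<in> \<delta>" using tr[OF ax(1)] by simp_all
      then show "inf x y \<in> X" "sup x y \<in> X" using Xa by simp_all
      fix z assume xzy: "x \<le> z \<and> z \<le> y"
      have "(x, z) \<in> \<delta>" using R xy' xzy by blast
      then have "(a, z) \<in> \<delta>" using tr[OF ax(1)] by simp
      then show "z \<in> X" using Xa by simp
    qed
  qed
qed

theorem proposition3p5:
  fixes \<delta> :: "('a::lattice) rel"
  assumes "equiv UNIV \<delta>"
  shows "local_congruence \<delta> \<longleftrightarrow>
    (\<forall>a b c. (a, b) \<in> \<delta> \<and> inf a b \<le> c \<and> c \<le> sup a b \<longrightarrow>
        (sup a c, sup b c) \<in> \<delta> \<and> (inf a c, inf b c) \<in> \<delta>)"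
proof -
  have sy: "\<And>x y. (x,y) \<in> \<delta> \<Longrightarrow> (y,x) \<in> \<delta>" using assms by (meson equivE symD)
  have tr: "\<And>x y z. (x,y) \<in> \<delta> \<Longrightarrow> (y,z) \<in> \<delta> \<Longrightarrow> (x,z) \<in> \<delta>" using assms by (meson equivE transD)
  show ?thesis unfolding lc_char[OF assms]
  proof
    assume R: "(\<forall>x y. (x,y) \<in> \<delta> \<longrightarrow> (x, inf x y) \<in> \<delta> \<and> (x, sup x y) \<in> \<delta>) \<and>
    (\<forall>x y z. (x,y) \<in> \<delta> \<and> x \<le> z \<and> z \<le> y \<longrightarrow> (x,z) \<in> \<delta>)"
    show "\<forall>a b c. (a, b) \<in> \<delta> \<and> inf a b \<le> c \<and> c \<le> sup a b \<longrightarrow>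
        (sup a c, sup b c) \<in> \<delta> \<and> (inf a c, inf b c) \<in> \<delta>"
    proof (intro allI impI)
      fix a b c assume H: "(a, b) \<in> \<delta> \<and> inf a b \<le> c \<and> c \<le> sup a b"
      have 1: "(a, inf a b) \<in> \<delta>" "(a, sup a b) \<in> \<delta>" using R H by auto
      have 2: "(inf a b, sup a b) \<in> \<delta>" using 1 sy tr by blast
      have cd: "\<And>u. inf a b \<le> u \<Longrightarrow> u \<le> sup a b \<Longrightarrow> (inf a b, u) \<in> \<delta>" using R 2 by simp
      have H1: "inf a b \<le> c" and H2: "c \<le> sup a b" using H by simp_all
      have f1: "(inf a b, sup a c) \<in> \<delta>"
        by (rule cd[OF le_supI1[OF inf.cobounded1] le_supI[OF sup.cobounded1 H2]])
      have f2: "(inf a b, sup b c) \<in> \<delta>"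
        by (rule cd[OF le_supI1[OF inf.cobounded2] le_supI[OF sup.cobounded2 H2]])
      have f3: "(inf a b, inf a c) \<in> \<delta>"
        by (rule cd[OF le_infI[OF inf.cobounded1 H1] le_supI1[OF inf.cobounded1]])
      have f4: "(inf a b, inf b c) \<in> \<delta>"
        by (rule cd[OF le_infI[OF inf.cobounded2 H1] le_supI2[OF inf.cobounded1]])
      show "(sup a c, sup b c) \<in> \<delta> \<and> (inf a c, inf b c) \<in> \<delta>"
        using conjI[OF tr[OF sy[OF f1] f2] tr[OF sy[OF f3] f4]] .
    qed
  next
    assume C: "\<forall>a b c. (a, b) \<in> \<delta> \<and> inf a b \<le> c \<and> c \<le> sup a b \<longrightarrow>
        (sup a c, sup b c) \<in> \<delta> \<and> (inf a c, inf b c) \<in> \<delta>"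
    show "(\<forall>x y. (x,y) \<in> \<delta> \<longrightarrow> (x, inf x y) \<in> \<delta> \<and> (x, sup x y) \<in> \<delta>) \<and>
    (\<forall>x y z. (x,y) \<in> \<delta> \<and> x \<le> z \<and> z \<le> y \<longrightarrow> (x,z) \<in> \<delta>)"
    proof (intro conjI allI impI)
      fix x y assume xy: "(x,y) \<in> \<delta>"
      have "(sup x x, sup y x) \<in> \<delta> \<and> (inf x x, inf y x) \<in> \<delta>"
        using C[rule_format, of x y x] xy by simp
      moreover have "sup y x = sup x y" "inf y x = inf x y" by (rule sup.commute, rule inf.commute)
      ultimately show "(x, inf x y) \<in> \<delta>" "(x, sup x y) \<in> \<delta>" by simp_all
    next
      fix x y z assume H: "(x,y) \<in> \<delta> \<and> x \<le> z \<and> z \<le> y"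
      then have xz: "x \<le> z" and zy: "z \<le> y" by simp_all
      have xly: "x \<le> y" using order_trans[OF xz zy] .
      have "inf x y = x" "sup x y = y" using inf_absorb1[OF xly] sup_absorb2[OF xly] by simp_all
      then have "(sup x z, sup y z) \<in> \<delta>" using C[rule_format, of x y z] H by simp
      moreover have "sup x z = z" "sup y z = y" using sup_absorb2[OF xz] sup_absorb1[OF zy] by simp_all
      ultimately have "(z, y) \<in> \<delta>" by simp
      then show "(x,z) \<in> \<delta>" using H sy tr by blast
    qed
  qed
qed

end
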